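(* Let $x$ be large, let $0<\kappa<1/2$, and let $(a_m)_{m\ge1}$ be a complex sequence with $a_m\ll m^{O(1/\log(1+m)^\kappa+1/\log_2x)}/m_0$, where $m_0$ is the squarefree part of $m$. Then for $B>0$ and $z\in\mathbb C$ with $|z|\le B\log x/(\log_2x\log_3x)$, \[\sum_{m=1}^\infty\frac{d_z(m)}{m}a_m\ll\exp\Bigl((2B+o(1))\frac{\log x}{\log_2x}\Bigr).\]
   Context: For $z\in\mathbb C$, $d_z$ is the multiplicative function with $d_z(p^\nu)=\Gamma(z+\nu)/(\Gamma(z)\nu!)$ (the Dirichlet coefficients of $\zeta(s)^z$). $\log_k$ is the $k$-fold iterated logarithm; $o(1)$ is as $x\to\infty$. *)

theory Defs
  imports "HOL-Analysis.Analysis" "HOL-Computational_Algebra.Primes"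
begin

text \<open>Generalized divisor function d_z: multiplicative, with
  d_z(p^nu) = Gamma(z+nu)/(Gamma(z) nu!) = pochhammer z nu / nu!
  (the rising factorial is the entire continuation of Gamma(z+nu)/Gamma(z)).\<close>
definition dz :: "complex \<Rightarrow> nat \<Rightarrow> complex" where
  "dz z m = (\<Prod>p\<in>prime_factors m. pochhammer z (multiplicity p m) / of_nat (fact (multiplicity p m)))"

text \<open>Squarefree part m_0 of m: writing m = m_0 m_1 with m_0 squarefree, m_1 squarefull,
  gcd(m_0,m_1)=1, i.e. the product of the primes dividing m exactly once.\<close>
definition sqfree_part :: "nat \<Rightarrow> nat" where
  "sqfree_part m = (\<Prod>p\<in>{p\<in>prime_factors m. multiplicity p m = 1}. p)"

end

theory Submission
  imports Defs "HOL-Real_Asymp.Real_Asymp"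
begin

lemma prod_pf_le: "n > 0 \<Longrightarrow> (\<Prod>p\<in>prime_factors n. p) \<le> (n::nat)"
proof -
  assume n: "n > 0"
  have "(\<Prod>p\<in>prime_factors n. p) \<le> (\<Prod>p\<in>prime_factors n. p ^ multiplicity p n)"
  proof (rule prod_mono, safe)
    fix p assume p: "p \<in> prime_factors n"
    then have "multiplicity p n \<ge> 1" using n
      by (simp add: prime_factors_multiplicity)
    moreover have "p > 0" using p by (simp add: in_prime_factors_iff prime_gt_0_nat)
    ultimately show "p \<le> p ^ multiplicity p n"
      by (metis One_nat_def Suc_le_eq power_increasing power_one_right)
  qed
  also have "\<dots> = n" using prime_factorization_nat[OF n] by simp
  finally show ?thesis .
qed

lemma card_mult_ge: "card {k\<in>{1..n}. (p::nat) dvd k} \<ge> n div p"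
proof (cases "p = 0")
  case True then show ?thesis by simp
next
  case False
  have "(\<lambda>j. j * p) ` {1..n div p} \<subseteq> {k\<in>{1..n}. p dvd k}"
  proof (safe)
    fix j assume j: "j \<in> {1..n div p}"
    then have "j * p \<le> n div p * p" by simp
    also have "\<dots> \<le> n" by simp
    finally show "j * p \<in> {1..n}" using j False by auto
  qed auto
  moreover have "inj_on (\<lambda>j. j * p) {1..n div p}" using False by (auto simp: inj_on_def)
  ultimately have "card ((\<lambda>j. j * p) ` {1..n div p}) \<le> card {k\<in>{1..n}. p dvd k}"
    by (intro card_mono) auto
  then show ?thesis using card_image[OF \<open>inj_on _ _\<close>] by simp
qed

lemma div_ge_real: "(p::nat) > 0 \<Longrightarrow> real n / real p - 1 \<le> real (n div p)"
proof -
  assume p: "p > 0"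
  have e: "real n = real (n div p) * real p + real (n mod p)"
    by (metis div_mult_mod_eq of_nat_add of_nat_mult)
  have "real (n mod p) < real p" using p by simp
  then have "real n < (real (n div p) + 1) * real p" using e by (simp add: algebra_simps)
  then have "real n / real p < real (n div p) + 1" using p by (simp add: field_simps)
  then show ?thesis by simp
qed

lemma mertens_crude:
  "(\<Sum>p | prime p \<and> p \<le> n. ln (real p) / real p) \<le> 2 * ln (real n)"
proof (cases "n = 0")
  case True then show ?thesis by simp
next
  case False
  define P where "P = {p. prime p \<and> p \<le> n}"
  have finP: "finite P" unfolding P_def by simp
  have Psub: "P \<subseteq> {1..n}" unfolding P_def using prime_ge_1_nat by auto
  have cardP: "card P \<le> n" using card_mono[OF _ Psub] by simp
  have lnp: "\<And>p. p \<in> P \<Longrightarrow> 0 \<le> ln (real p)" unfolding P_def using prime_ge_1_nat by auto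
  have A: "(\<Sum>k\<in>{1..n}. ln (real k)) \<le> real n * ln (real n)"
  proof -
    have "(\<Sum>k\<in>{1..n}. ln (real k)) \<le> (\<Sum>k\<in>{1..n}. ln (real n))"
      by (intro sum_mono) auto
    then show ?thesis by simp
  qed
  have B: "(\<Sum>p\<in>P. (if p dvd k then ln (real p) else 0)) \<le> ln (real k)" if k: "k \<in> {1..n}" for k
  proof -
    have "prime_factors k = {p\<in>P. p dvd k}"
    proof (intro set_eqI iffI)
      fix p assume "p \<in> prime_factors k"
      then have "prime p" "p dvd k" by (auto simp: in_prime_factors_iff)
      moreover have "p \<le> k" using \<open>p dvd k\<close> k by (intro dvd_imp_le) auto
      ultimately show "p \<in> {p\<in>P. p dvd k}" using k unfolding P_def by auto
    next
      fix p assume "p \<in> {p\<in>P. p dvd k}"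
      then show "p \<in> prime_factors k" using k unfolding P_def by (auto simp: in_prime_factors_iff)
    qed
    then have "(\<Sum>p\<in>P. (if p dvd k then ln (real p) else 0)) = (\<Sum>p\<in>prime_factors k. ln (real p))"
      by (simp add: sum.inter_filter[OF finP, symmetric])
    also have "\<dots> = ln (\<Prod>p\<in>prime_factors k. real p)"
      by (subst ln_prod) (auto simp: in_prime_factors_iff prime_gt_0_nat)
    also have "\<dots> \<le> ln (real k)"
    proof -
      have "(\<Prod>p\<in>prime_factors k. p) \<le> k" using prod_pf_le k by auto
      then have "real (\<Prod>p\<in>prime_factors k. p) \<le> real k"
        by (simp only: of_nat_le_iff)
      then have "(\<Prod>p\<in>prime_factors k. real p) \<le> real k"
        by simp
      moreover have "0 < (\<Prod>p\<in>prime_factors k. real p)"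
        by (intro prod_pos) (auto simp: in_prime_factors_iff prime_gt_0_nat)
      ultimately show ?thesis by simp
    qed
    finally show ?thesis .
  qed
  have C: "(\<Sum>k\<in>{1..n}. \<Sum>p\<in>P. (if p dvd k then ln (real p) else 0))
        = (\<Sum>p\<in>P. ln (real p) * real (card {k\<in>{1..n}. p dvd k}))"
    apply (subst sum.swap)
    apply (simp add: sum.If_cases)
    apply (rule sum.cong[OF refl])
    subgoal for p
      apply (subgoal_tac "{Suc 0..n} \<inter> Collect ((dvd) p) = {k. Suc 0 \<le> k \<and> k \<le> n \<and> p dvd k}")
      by auto
    done
  have D: "ln (real p) * (real n / real p - 1) \<le> ln (real p) * real (card {k\<in>{1..n}. p dvd k})"
    if p: "p \<in> P" for p
  proof -
    have "p > 0" using p unfolding P_def by (simp add: prime_gt_0_nat)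
    then have "real n / real p - 1 \<le> real (n div p)" by (rule div_ge_real)
    also have "\<dots> \<le> real (card {k\<in>{1..n}. p dvd k})" using card_mult_ge by simp
    finally show ?thesis using lnp[OF p] by (rule mult_left_mono)
  qed
  have E: "(\<Sum>p\<in>P. ln (real p)) \<le> real n * ln (real n)"
  proof -
    have "(\<Sum>p\<in>P. ln (real p)) \<le> (\<Sum>p\<in>P. ln (real n))"
    proof (intro sum_mono)
      fix p assume "p \<in> P"
      then have "0 < real p" "real p \<le> real n" unfolding P_def by (auto simp: prime_gt_0_nat)
      then show "ln (real p) \<le> ln (real n)" by simp
    qed
    also have "\<dots> = real (card P) * ln (real n)" by simp
    also have "\<dots> \<le> real n * ln (real n)" using cardP False by (intro mult_right_mono) auto
    finally show ?thesis .
  qed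
  have "(\<Sum>p\<in>P. ln (real p) * (real n / real p - 1)) \<le> real n * ln (real n)"
  proof -
    have "(\<Sum>p\<in>P. ln (real p) * (real n / real p - 1)) \<le> (\<Sum>p\<in>P. ln (real p) * real (card {k\<in>{1..n}. p dvd k}))"
      using D by (rule sum_mono)
    moreover have "(\<Sum>k\<in>{1..n}. \<Sum>p\<in>P. (if p dvd k then ln (real p) else 0)) \<le> (\<Sum>k\<in>{1..n}. ln (real k))"
      using B by (rule sum_mono)
    ultimately show ?thesis using C A by linarith
  qed
  moreover have "(\<Sum>p\<in>P. ln (real p) * (real n / real p - 1))
      = real n * (\<Sum>p\<in>P. ln (real p) / real p) - (\<Sum>p\<in>P. ln (real p))"
    by (simp add: sum_distrib_left sum_subtractf algebra_simps)
  ultimately have "real n * (\<Sum>p\<in>P. ln (real p) / real p) \<le> real n * (2 * ln (real n))"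
    using E by linarith
  then show ?thesis using False unfolding P_def by simp
qed

definition cpr :: "nat \<Rightarrow> real" where "cpr k = (if prime k then ln (real k) / real k else 0)"

lemma S_eq: "(\<Sum>k\<in>{2..n}. cpr k) = (\<Sum>p | prime p \<and> p \<le> n. ln (real p) / real p)"
proof -
  have "(\<Sum>k\<in>{2..n}. cpr k) = (\<Sum>k\<in>{k\<in>{2..n}. prime k}. ln (real k) / real k)"
    unfolding cpr_def by (rule sum.inter_filter[symmetric]) simp
  also have "{k\<in>{2..n}. prime k} = {p. prime p \<and> p \<le> n}"
    using prime_ge_2_nat by auto
  finally show ?thesis .
qed

lemma S_le: "(\<Sum>k\<in>{2..n}. cpr k) \<le> 2 * ln (real n)"
  using S_eq mertens_crude by simp

lemma F_eq: "(\<Sum>k\<in>{2..n}. cpr k / ln (real k)) = (\<Sum>p | prime p \<and> p \<le> n. 1 / real p)"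
proof -
  have "(\<Sum>k\<in>{2..n}. cpr k / ln (real k)) = (\<Sum>k\<in>{k\<in>{2..n}. prime k}. 1 / real k)"
  proof -
    have "(\<Sum>k\<in>{2..n}. cpr k / ln (real k)) = (\<Sum>k\<in>{2..n}. if prime k then 1 / real k else 0)"
      by (intro sum.cong refl) (auto simp: cpr_def)
    also have "\<dots> = (\<Sum>k\<in>{k\<in>{2..n}. prime k}. 1 / real k)"
      by (rule sum.inter_filter[symmetric]) simp
    finally show ?thesis .
  qed
  also have "{k\<in>{2..n}. prime k} = {p. prime p \<and> p \<le> n}"
    using prime_ge_2_nat by auto
  finally show ?thesis .
qed

lemma abel_step:
  assumes "n \<ge> 2"
  shows "(\<Sum>k\<in>{2..n}. cpr k / ln (real k)) - (\<Sum>k\<in>{2..n}. cpr k) / ln (real n)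
         \<le> 2 * ln (ln (real n)) - 2 * ln (ln 2)"
  using assms
proof (induction n rule: nat_induct_at_least)
  case base
  then show ?case by simp
next
  case (Suc n)
  define F where "F = (\<Sum>k\<in>{2..n}. cpr k / ln (real k))"
  define S where "S = (\<Sum>k\<in>{2..n}. cpr k)"
  have ln0: "ln (real n) > 0" using Suc by simp
  have ln1: "ln (real n) < ln (real (Suc n))" using Suc by simp
  have F1: "(\<Sum>k\<in>{2..Suc n}. cpr k / ln (real k)) = F + cpr (Suc n) / ln (real (Suc n))"
    unfolding F_def using Suc by (simp add: sum.atLeast_Suc_atMost_Suc_shift del: of_nat_Suc)
  have S1: "(\<Sum>k\<in>{2..Suc n}. cpr k) = S + cpr (Suc n)"
    unfolding S_def using Suc by (simp add: sum.atLeast_Suc_atMost_Suc_shift del: of_nat_Suc)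
  have S0: "S \<le> 2 * ln (real n)" unfolding S_def by (rule S_le)
  have "S * (1 / ln (real n) - 1 / ln (real (Suc n))) \<le> 2 * ln (real n) * (1 / ln (real n) - 1 / ln (real (Suc n)))"
  proof (rule mult_right_mono[OF S0])
    show "0 \<le> 1 / ln (real n) - 1 / ln (real (Suc n))"
      using ln0 ln1 by (simp add: frac_le)
  qed
  also have "\<dots> = 2 - 2 * (ln (real n) / ln (real (Suc n)))" using ln0 by (simp add: field_simps)
  also have "\<dots> \<le> 2 * (ln (ln (real (Suc n))) - ln (ln (real n)))"
  proof -
    have "ln (ln (real n) / ln (real (Suc n))) \<le> ln (real n) / ln (real (Suc n)) - 1"
      using ln0 ln1 Suc.hyps by (intro ln_le_minus_one divide_pos_pos) auto
    moreover have "ln (ln (real n) / ln (real (Suc n))) = ln (ln (real n)) - ln (ln (real (Suc n)))"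
      using ln0 ln1 by (subst ln_div) auto
    ultimately show ?thesis
      by (smt (verit))
  qed
  finally have X: "S * (1 / ln (real n) - 1 / ln (real (Suc n))) \<le> 2 * (ln (ln (real (Suc n))) - ln (ln (real n)))" .
  have "(\<Sum>k\<in>{2..Suc n}. cpr k / ln (real k)) - (\<Sum>k\<in>{2..Suc n}. cpr k) / ln (real (Suc n))
     = (F - S / ln (real n)) + S * (1 / ln (real n) - 1 / ln (real (Suc n)))"
  proof -
    have "ln (1 + real n) > 0" using Suc.hyps by simp
    then show ?thesis unfolding F1 S1 using ln0 by (simp add: field_simps)
  qed
  also have "\<dots> \<le> (2 * ln (ln (real n)) - 2 * ln (ln 2)) + 2 * (ln (ln (real (Suc n))) - ln (ln (real n)))"
    using Suc.IH X unfolding F_def S_def by linarith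
  finally show ?case by simp
qed

lemma mertens2:
  assumes "n \<ge> 2"
  shows "(\<Sum>p | prime p \<and> p \<le> n. 1 / real p) \<le> 2 * ln (ln (real n)) + 2 - 2 * ln (ln 2)"
proof -
  have "(\<Sum>k\<in>{2..n}. cpr k) / ln (real n) \<le> 2"
    using S_le[of n] assms by (simp add: divide_simps)
  then show ?thesis using abel_step[OF assms] F_eq[of n] by linarith
qed

lemma mult_le_N:
  assumes "m \<in> {1..N}" "prime p"
  shows "multiplicity p m \<le> (N::nat)"
proof -
  have "p ^ multiplicity p m dvd m" by (rule multiplicity_dvd)
  then have "p ^ multiplicity p m \<le> m" using assms by (intro dvd_imp_le) auto
  moreover have "multiplicity p m < 2 ^ multiplicity p m" by (rule less_exp)
  moreover have "(2::nat) ^ multiplicity p m \<le> p ^ multiplicity p m"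
    using prime_ge_2_nat[OF assms(2)] by (rule power_mono) simp
  moreover have "m \<le> N" using assms by simp
  ultimately show ?thesis by linarith
qed

lemma euler_bound:
  fixes h :: "nat \<Rightarrow> nat \<Rightarrow> real"
  assumes h0: "\<And>p v. 0 \<le> h p v" and h1: "\<And>p. h p 0 = 1"
  shows "(\<Sum>m\<in>{1..N}. \<Prod>p\<in>prime_factors m. h p (multiplicity p m))
         \<le> (\<Prod>p\<in>{p. prime p \<and> p \<le> N}. \<Sum>v\<in>{..N}. h p v)"
proof -
  define P where "P = {p. prime p \<and> p \<le> N}"
  have finP: "finite P" unfolding P_def by simp
  define F where "F = (\<lambda>g. \<Prod>p\<in>P. h p (g p))"
  define \<phi> where "\<phi> = (\<lambda>m. restrict (\<lambda>p. multiplicity p m) P)"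
  have RHS: "(\<Prod>p\<in>P. \<Sum>v\<in>{..N}. h p v) = (\<Sum>g\<in>PiE P (\<lambda>_. {..N}). F g)"
    unfolding F_def by (rule prod_sum_PiE) (use finP in auto)
  have pfsub: "prime_factors m \<subseteq> P" if m: "m \<in> {1..N}" for m
  proof
    fix p assume "p \<in> prime_factors m"
    then have "prime p" "p dvd m" by (auto simp: in_prime_factors_iff)
    moreover have "p \<le> m" using \<open>p dvd m\<close> m by (intro dvd_imp_le) auto
    ultimately show "p \<in> P" using m unfolding P_def by auto
  qed
  have Fphi: "F (\<phi> m) = (\<Prod>p\<in>prime_factors m. h p (multiplicity p m))" if m: "m \<in> {1..N}" for m
  proof -
    have "F (\<phi> m) = (\<Prod>p\<in>P. h p (multiplicity p m))"
      unfolding F_def \<phi>_def by (intro prod.cong) auto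
    also have "\<dots> = (\<Prod>p\<in>prime_factors m. h p (multiplicity p m))"
    proof (rule prod.mono_neutral_right[OF finP pfsub[OF m]], safe)
      fix p assume "p \<in> P" "p \<notin> prime_factors m"
      then have "multiplicity p m = 0" using m unfolding P_def
        by (auto simp: in_prime_factors_iff not_dvd_imp_multiplicity_0)
      then show "h p (multiplicity p m) = 1" by (simp add: h1)
    qed
    finally show ?thesis .
  qed
  have inj: "inj_on \<phi> {1..N}"
  proof (rule inj_onI)
    fix m m' assume m: "m \<in> {1..N}" and m': "m' \<in> {1..N}" and e: "\<phi> m = \<phi> m'"
    have "multiplicity p m = multiplicity p m'" if p: "prime p" for p
    proof (cases "p \<in> P")
      case True
      then show ?thesis using fun_cong[OF e, of p] unfolding \<phi>_def by simp
    next
      case False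
      then have "p > N" using p unfolding P_def by auto
      then have "\<not> p dvd m" "\<not> p dvd m'" using m m'
        by (auto dest!: dvd_imp_le)
      then show ?thesis by (simp add: not_dvd_imp_multiplicity_0)
    qed
    then have "normalize m = normalize m'" using m m'
      by (intro multiplicity_eq_imp_eq) auto
    then show "m = m'" by simp
  qed
  have img: "\<phi> ` {1..N} \<subseteq> PiE P (\<lambda>_. {..N})"
  proof
    fix g assume "g \<in> \<phi> ` {1..N}"
    then obtain m where m: "m \<in> {1..N}" and g: "g = \<phi> m" by auto
    show "g \<in> PiE P (\<lambda>_. {..N})" unfolding g \<phi>_def restrict_PiE_iff
      using mult_le_N[OF m] unfolding P_def by auto
  qed
  have "(\<Sum>m\<in>{1..N}. \<Prod>p\<in>prime_factors m. h p (multiplicity p m)) = (\<Sum>m\<in>{1..N}. F (\<phi> m))"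
    using Fphi by simp
  also have "\<dots> = (\<Sum>g\<in>\<phi> ` {1..N}. F g)" using sum.reindex[OF inj, of F] by simp
  also have "\<dots> \<le> (\<Sum>g\<in>PiE P (\<lambda>_. {..N}). F g)"
    by (rule sum_mono2[OF _ img]) (auto simp: finP finite_PiE F_def h0 prod_nonneg)
  also have "\<dots> = (\<Prod>p\<in>P. \<Sum>v\<in>{..N}. h p v)" by (rule RHS[symmetric])
  finally show ?thesis unfolding P_def .
qed

definition bq :: "real \<Rightarrow> nat \<Rightarrow> real" where "bq r v = pochhammer r v / fact v"

lemma poch_nonneg: "(r::real) \<ge> 0 \<Longrightarrow> pochhammer r n \<ge> 0"
  by (induction n) (auto simp: pochhammer_Suc)

lemma bq_nonneg: "r \<ge> 0 \<Longrightarrow> bq r v \<ge> 0"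
  unfolding bq_def by (intro divide_nonneg_pos poch_nonneg) auto

lemma bq_0 [simp]: "bq r 0 = 1" and bq_1 [simp]: "bq r 1 = r"
  unfolding bq_def by simp_all

lemma bq_le: "r \<ge> 0 \<Longrightarrow> bq r v \<le> (r + 1) ^ v"
proof (induction v)
  case 0 then show ?case by simp
next
  case (Suc v)
  have e: "bq r (Suc v) = bq r v * ((r + real v) / (real v + 1))"
    unfolding bq_def by (simp add: pochhammer_Suc fact_Suc field_simps)
  have "(r + real v) / (real v + 1) \<le> r + 1"
    using Suc.prems by (simp add: field_simps)
  then have "bq r v * ((r + real v) / (real v + 1)) \<le> (r + 1) ^ v * (r + 1)"
    using Suc bq_nonneg[of r v] by (intro mult_mono) (auto simp: field_simps)
  then show ?case using e by (simp add: mult.commute)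
qed

lemma norm_pochhammer_le: "norm (pochhammer (z::complex) n) \<le> pochhammer (norm z) n"
proof (induction n)
  case 0 then show ?case by simp
next
  case (Suc n)
  have "norm (pochhammer z (Suc n)) = norm (pochhammer z n) * norm (z + of_nat n)"
    by (simp add: pochhammer_Suc norm_mult)
  also have "\<dots> \<le> pochhammer (norm z) n * (norm z + real n)"
  proof (rule mult_mono[OF Suc.IH])
    show "norm (z + of_nat n) \<le> norm z + real n"
      using norm_triangle_ineq[of z "of_nat n"] by simp
  qed (auto simp: poch_nonneg)
  also have "\<dots> = pochhammer (norm z) (Suc n)" by (simp add: pochhammer_Suc)
  finally show ?case .
qed

lemma norm_dz_le: "norm (dz z m) \<le> (\<Prod>p\<in>prime_factors m. bq (norm z) (multiplicity p m))"
proof -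
  have "norm (dz z m) = (\<Prod>p\<in>prime_factors m. norm (pochhammer z (multiplicity p m) / of_nat (fact (multiplicity p m))))"
    unfolding dz_def by (simp add: prod_norm)
  also have "\<dots> \<le> (\<Prod>p\<in>prime_factors m. bq (norm z) (multiplicity p m))"
  proof (rule prod_mono, safe)
    fix p
    have "norm (pochhammer z (multiplicity p m) / of_nat (fact (multiplicity p m)))
        = norm (pochhammer z (multiplicity p m)) / fact (multiplicity p m)"
      by (simp add: norm_divide)
    also have "\<dots> \<le> bq (norm z) (multiplicity p m)"
      unfolding bq_def by (intro divide_right_mono norm_pochhammer_le) auto
    finally show "norm (pochhammer z (multiplicity p m) / of_nat (fact (multiplicity p m))) \<le> bq (norm z) (multiplicity p m)" .
  qed auto
  finally show ?thesis .
qed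

lemma binom_sum_le:
  assumes r: "r \<ge> 0" and q: "0 \<le> q" "q < 1" and that: "finite A"
  shows "(\<Sum>v\<in>A. bq r v * q ^ v) \<le> (1 - q) powr (-r)"
proof -
  have e: "bq r v * q ^ v = ((-r) gchoose v) * (-q) ^ v" for v
    unfolding bq_def gbinomial_pochhammer
    by (simp add: power_minus' field_simps)
  have s: "(\<lambda>v. bq r v * q ^ v) sums (1 - q) powr (-r)"
    using gen_binomial_real[of "-q" "-r"] q unfolding e by simp
  show ?thesis
    using sum_le_suminf[OF sums_summable[OF s] that] sums_unique[OF s] bq_nonneg[OF r] q
    by (simp add: mult_nonneg_nonneg)
qed

definition hh :: "real \<Rightarrow> real \<Rightarrow> real \<Rightarrow> nat \<Rightarrow> real" where
  "hh r s p v = (if v = 1 then r * p powr (s - 1) / p else bq r v * (p powr (s - 1)) ^ v)"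

lemma hh_0 [simp]: "hh r s p 0 = 1" unfolding hh_def by simp

lemma hh_nonneg: "r \<ge> 0 \<Longrightarrow> p \<ge> 0 \<Longrightarrow> hh r s p v \<ge> 0"
  unfolding hh_def using bq_nonneg by auto

lemma q_facts:
  fixes p s :: real
  assumes p: "p \<ge> 2" and s: "s \<le> 1/2"
  shows "0 < p powr (s - 1)" "p powr (s - 1) \<le> 3/4"
proof -
  show "0 < p powr (s - 1)" using p by simp
  have "(p powr (s - 1)) ^ 2 = p powr (2 * s - 2)"
    using p by (simp add: powr_realpow[symmetric] powr_powr algebra_simps)
  also have "\<dots> \<le> p powr (-1)" using p s by (intro powr_mono) auto
  also have "\<dots> = 1 / p" using p by (simp add: powr_minus divide_inverse)
  also have "\<dots> \<le> 1/2" using p by simp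
  finally have sq: "(p powr (s - 1)) ^ 2 \<le> 1/2" .
  show "p powr (s - 1) \<le> 3/4"
  proof (rule ccontr)
    assume "\<not> p powr (s - 1) \<le> 3/4"
    then have "(3/4) ^ 2 < (p powr (s - 1)) ^ 2"
      by (intro power_strict_mono) auto
    then show False using sq by (simp add: power2_eq_square)
  qed
qed

lemma T_ge1:
  fixes p :: real
  assumes "r \<ge> 0" "p \<ge> 0"
  shows "1 \<le> (\<Sum>v\<in>{..N}. hh r s p v)"
proof -
  have "hh r s p 0 \<le> (\<Sum>v\<in>{..N}. hh r s p v)"
    by (rule member_le_sum) (auto intro: hh_nonneg assms)
  then show ?thesis by simp
qed

lemma local_small:
  assumes r: "r \<ge> 0" and p: "p \<ge> 2" and s: "s \<le> 1/2"
  defines "q \<equiv> p powr (s - 1)"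
  shows "ln (\<Sum>v\<in>{..N}. hh r s p v) \<le> r * q + 4 * r * q ^ 2"
proof -
  have q0: "0 < q" and q1: "q \<le> 3/4" using q_facts[OF p s] unfolding q_def by auto
  have "(\<Sum>v\<in>{..N}. hh r s p v) \<le> (\<Sum>v\<in>{..N}. bq r v * q ^ v)"
  proof (rule sum_mono)
    fix v
    show "hh r s p v \<le> bq r v * q ^ v"
    proof (cases "v = 1")
      case True
      have "r * q * 1 \<le> r * q * p" using r q0 p by (intro mult_left_mono) auto
      then have "r * q / p \<le> r * q" using p by (simp add: divide_le_eq)
      then show ?thesis using True unfolding hh_def q_def by (simp add: bq_def)
    qed (simp add: hh_def q_def)
  qed
  also have "\<dots> \<le> (1 - q) powr (-r)" using binom_sum_le[OF r] q0 q1 by simp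
  finally have T: "(\<Sum>v\<in>{..N}. hh r s p v) \<le> (1 - q) powr (-r)" .
  have "ln (\<Sum>v\<in>{..N}. hh r s p v) \<le> ln ((1 - q) powr (-r))"
    using T T_ge1[OF r, of p s N] p by (subst ln_le_cancel_iff) auto
  also have "\<dots> = r * (- ln (1 - q))" using q1 by (simp add: ln_powr)
  also have "\<dots> \<le> r * (q + 4 * q ^ 2)"
  proof (rule mult_left_mono[OF _ r])
    have "- ln (1 - q) = ln (1 / (1 - q))" using q1 by (simp add: ln_div)
    also have "\<dots> \<le> 1 / (1 - q) - 1" using q1 by (intro ln_le_minus_one) auto
    also have "\<dots> = q + q ^ 2 / (1 - q)" using q1 by (simp add: field_simps power2_eq_square)
    also have "\<dots> \<le> q + 4 * q ^ 2"
    proof -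
      have "q ^ 2 / (1 - q) \<le> q ^ 2 / (1/4)" using q1 q0 by (intro divide_left_mono) auto
      then show ?thesis by simp
    qed
    finally show "- ln (1 - q) \<le> q + 4 * q ^ 2" .
  qed
  finally show ?thesis by (simp add: algebra_simps)
qed

lemma geom_tail:
  fixes t :: real
  assumes "0 \<le> t" "t \<le> 1/2"
  shows "(\<Sum>v\<in>{2..N}. t ^ v) \<le> 2 * t ^ 2"
proof (cases "N < 2")
  case True then show ?thesis using assms by simp
next
  case False
  have "(\<Sum>v\<in>{2..N}. t ^ v) = (t ^ 2 - t ^ Suc N) / (1 - t)"
    using False assms by (subst sum_gp) auto
  also have "\<dots> \<le> t ^ 2 / (1 - t)" using assms by (intro divide_right_mono) auto
  also have "\<dots> \<le> t ^ 2 / (1/2)" using assms by (intro divide_left_mono) auto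
  also have "\<dots> = 2 * t ^ 2" by simp
  finally show ?thesis .
qed

lemma local_large:
  assumes r: "r \<ge> 0" and p: "p \<ge> 2" and s: "s \<le> 1/2" and N: "N \<ge> 1"
  defines "q \<equiv> p powr (s - 1)"
  assumes t: "(r + 1) * q \<le> 1/2"
  shows "ln (\<Sum>v\<in>{..N}. hh r s p v) \<le> r * q / p + 2 * (r + 1) ^ 2 * q ^ 2"
proof -
  have q0: "0 < q" and q1: "q \<le> 3/4" using q_facts[OF p s] unfolding q_def by auto
  have set: "{..N} = insert 0 (insert 1 {2..N})" using N by auto
  have "(\<Sum>v\<in>{..N}. hh r s p v) = 1 + r * q / p + (\<Sum>v\<in>{2..N}. bq r v * q ^ v)"
    unfolding set by (simp add: hh_def q_def)
  also have "(\<Sum>v\<in>{2..N}. bq r v * q ^ v) \<le> (\<Sum>v\<in>{2..N}. ((r + 1) * q) ^ v)"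
  proof (rule sum_mono)
    fix v
    have "bq r v * q ^ v \<le> (r + 1) ^ v * q ^ v"
      using bq_le[OF r, of v] q0 by (intro mult_right_mono) auto
    then show "bq r v * q ^ v \<le> ((r + 1) * q) ^ v" by (simp add: power_mult_distrib)
  qed
  also have "\<dots> \<le> 2 * ((r + 1) * q) ^ 2"
    using r q0 t by (intro geom_tail) auto
  finally have T: "(\<Sum>v\<in>{..N}. hh r s p v) \<le> 1 + r * q / p + 2 * (r + 1) ^ 2 * q ^ 2"
    by (simp add: power_mult_distrib)
  have "ln (\<Sum>v\<in>{..N}. hh r s p v) \<le> (\<Sum>v\<in>{..N}. hh r s p v) - 1"
    using T_ge1[OF r, of p s N] p by (intro ln_le_minus_one) auto
  then show ?thesis using T by linarith
qed

lemma pow_powr: "(x::real) > 0 \<Longrightarrow> (x ^ n) powr a = (x powr a) ^ n"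
proof -
  assume x: "x > 0"
  have "(x ^ n) powr a = (x powr real n) powr a" using x by (simp add: powr_realpow)
  also have "\<dots> = x powr (a * real n)" by (simp add: powr_powr mult.commute)
  also have "\<dots> = (x powr a) powr real n" by (simp add: powr_powr)
  also have "\<dots> = (x powr a) ^ n" using x by (simp add: powr_realpow)
  finally show ?thesis .
qed

lemma m_powr_prod:
  assumes m: "m > 0"
  shows "real m powr a = (\<Prod>p\<in>prime_factors m. (real p powr a) ^ multiplicity p m)"
proof -
  have "real m = (\<Prod>p\<in>prime_factors m. real p ^ multiplicity p m)"
    using prime_factorization_nat[OF m] by (metis (no_types, lifting) of_nat_power of_nat_prod prod.cong)
  then have "real m powr a = (\<Prod>p\<in>prime_factors m. (real p ^ multiplicity p m) powr a)"
    by (simp add: prod_powr_distrib)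
  also have "\<dots> = (\<Prod>p\<in>prime_factors m. (real p powr a) ^ multiplicity p m)"
    by (intro prod.cong refl pow_powr) (auto simp: in_prime_factors_iff prime_gt_0_nat)
  finally show ?thesis .
qed

lemma sqf_prod:
  "real (sqfree_part m) = (\<Prod>p\<in>prime_factors m. (if multiplicity p m = 1 then real p else 1))"
  unfolding sqfree_part_def by (simp add: prod.inter_filter[symmetric])

lemma sqf_pos: "sqfree_part m > 0"
  unfolding sqfree_part_def by (intro prod_pos) (auto simp: in_prime_factors_iff prime_gt_0_nat)

lemma pointwise:
  assumes m: "m > 0"
  shows "norm (dz z m) * real m powr (s - 1) / real (sqfree_part m)
         \<le> (\<Prod>p\<in>prime_factors m. hh (norm z) s (real p) (multiplicity p m))"
proof -
  let ?P = "prime_factors m"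
  let ?v = "\<lambda>p. multiplicity p m"
  have "norm (dz z m) * real m powr (s - 1) / real (sqfree_part m)
     \<le> (\<Prod>p\<in>?P. bq (norm z) (?v p)) * (\<Prod>p\<in>?P. (real p powr (s - 1)) ^ ?v p)
        / (\<Prod>p\<in>?P. (if ?v p = 1 then real p else 1))"
    unfolding m_powr_prod[OF m] sqf_prod
    by (intro divide_right_mono mult_right_mono norm_dz_le) (auto intro!: prod_nonneg)
  also have "\<dots> = (\<Prod>p\<in>?P. bq (norm z) (?v p) * (real p powr (s - 1)) ^ ?v p / (if ?v p = 1 then real p else 1))"
    by (simp add: prod.distrib prod_dividef)
  also have "\<dots> = (\<Prod>p\<in>?P. hh (norm z) s (real p) (?v p))"
    by (intro prod.cong refl) (auto simp: hh_def bq_def)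
  finally show ?thesis .
qed

definition K54 :: real where "K54 = suminf (\<lambda>n. real n powr (-5/4))"

lemma summable54: "summable (\<lambda>n. real n powr (-5/4))"
  by (subst summable_real_powr_iff) simp

lemma sum_le_K54: "finite A \<Longrightarrow> (\<Sum>n\<in>A. real n powr (-5/4)) \<le> K54"
  unfolding K54_def by (rule sum_le_suminf[OF summable54]) auto

lemma K54_nonneg: "K54 \<ge> 0"
  unfolding K54_def by (rule suminf_nonneg[OF summable54]) simp

lemma sq_powr: "(x powr a) ^ 2 = (x::real) powr (2 * a)"
  by (simp add: power2_eq_square powr_add[symmetric])

lemma large_facts:
  fixes p r R s :: real
  assumes r: "0 \<le> r" "r \<le> R" and R: "R \<ge> 1" and s: "s \<le> 1/8"
      and pY: "p > (R + 1) powr 4"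
  shows "(r + 1) * p powr (s - 1) \<le> 1/2"
        "(r + 1) ^ 2 * p powr (2 * s - 2) \<le> p powr (-5/4)"
proof -
  define \<rho> where "\<rho> = R + 1"
  have \<rho>: "\<rho> \<ge> 2" using R unfolding \<rho>_def by simp
  have r1: "r + 1 \<le> \<rho>" "0 \<le> r + 1" using r unfolding \<rho>_def by auto
  have Y0: "0 < \<rho> powr 4" using \<rho> by simp
  have p1: "p \<ge> 1"
  proof -
    have "\<rho> powr 4 \<ge> \<rho> powr 0" using \<rho> by (intro powr_mono) auto
    then have "\<rho> powr 4 \<ge> 1" using \<rho> by simp
    then show ?thesis using pY unfolding \<rho>_def by linarith
  qed
  have "p powr (s - 1) \<le> p powr (-7/8)" using p1 s by (intro powr_mono) auto
  also have "\<dots> \<le> (\<rho> powr 4) powr (-7/8)" using pY Y0 unfolding \<rho>_def by (intro powr_mono2') auto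
  also have "\<dots> = \<rho> powr (-7/2)" by (simp add: powr_powr)
  finally have q: "p powr (s - 1) \<le> \<rho> powr (-7/2)" .
  have "(r + 1) * p powr (s - 1) \<le> \<rho> * \<rho> powr (-7/2)"
    using q r1 by (intro mult_mono) auto
  also have "\<dots> = \<rho> powr (-5/2)" using \<rho> by (simp add: powr_add[symmetric] powr_mult_base)
  also have "\<dots> \<le> \<rho> powr (-1)" using \<rho> by (intro powr_mono) auto
  also have "\<dots> = 1 / \<rho>" using \<rho> by (simp add: powr_minus divide_inverse)
  also have "\<dots> \<le> 1/2" using \<rho> by simp
  finally show "(r + 1) * p powr (s - 1) \<le> 1/2" .
  have "p powr (2 * s - 2) \<le> p powr (-7/4)" using p1 s by (intro powr_mono) auto
  also have "\<dots> = p powr (-1/2) * p powr (-5/4)" using p1 by (simp add: powr_add[symmetric])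
  also have "\<dots> \<le> (\<rho> powr 4) powr (-1/2) * p powr (-5/4)"
    using pY Y0 unfolding \<rho>_def by (intro mult_right_mono powr_mono2') auto
  also have "(\<rho> powr 4) powr (-1/2) = 1 / \<rho> ^ 2"
  proof -
    have "(\<rho> powr 4) powr (-1/2) = \<rho> powr (-2)" by (simp add: powr_powr)
    also have "\<dots> = 1 / \<rho> powr 2" using \<rho> by (simp add: powr_minus divide_inverse)
    also have "\<rho> powr 2 = \<rho> ^ 2" using \<rho> by (simp add: powr_numeral)
    finally show ?thesis .
  qed
  finally have "p powr (2 * s - 2) \<le> p powr (-5/4) / \<rho> ^ 2" by simp
  then have "(r + 1) ^ 2 * p powr (2 * s - 2) \<le> \<rho> ^ 2 * (p powr (-5/4) / \<rho> ^ 2)"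
    using r1 by (intro mult_mono power_mono) auto
  also have "\<dots> = p powr (-5/4)" using \<rho> by simp
  finally show "(r + 1) ^ 2 * p powr (2 * s - 2) \<le> p powr (-5/4)" .
qed

lemma finite_primes_le_real: "finite {p::nat. prime p \<and> real p \<le> Y}"
proof (rule finite_subset[of _ "{..nat \<lceil>Y\<rceil>}"])
  show "{p::nat. prime p \<and> real p \<le> Y} \<subseteq> {..nat \<lceil>Y\<rceil>}"
  proof
    fix p assume "p \<in> {p::nat. prime p \<and> real p \<le> Y}"
    then have "real p \<le> Y" by simp
    then have "real p \<le> real (nat \<lceil>Y\<rceil>)" using real_nat_ceiling_ge[of Y] by linarith
    then show "p \<in> {..nat \<lceil>Y\<rceil>}" by (simp only: of_nat_le_iff atMost_iff)
  qed
qed simp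

lemma log_prod_bound:
  fixes r R s :: real
  assumes r: "0 \<le> r" "r \<le> R" and R: "R \<ge> 1" and s: "0 \<le> s" "s \<le> 1/8"
  shows "(\<Sum>p\<in>{p. prime p \<and> p \<le> N}. ln (\<Sum>v\<in>{..N}. hh r s (real p) v))
     \<le> r * (\<Sum>p\<in>{p. prime p \<and> real p \<le> (R+1) powr 4}. real p powr (s - 1)) + 5 * r * K54 + 2 * K54"
proof -
  define Y where "Y = (R+1) powr 4"
  define P where "P = {p. prime p \<and> p \<le> N}"
  define P1 where "P1 = {p\<in>P. real p \<le> Y}"
  define P2 where "P2 = {p\<in>P. \<not> real p \<le> Y}"
  define T where "T = (\<lambda>p::nat. ln (\<Sum>v\<in>{..N}. hh r s (real p) v))"
  have finP: "finite P" unfolding P_def by simp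
  have fin1: "finite P1" "finite P2" unfolding P1_def P2_def using finP by auto
  have split: "sum T P = sum T P1 + sum T P2"
  proof -
    have "P = P1 \<union> P2" "P1 \<inter> P2 = {}" unfolding P1_def P2_def by auto
    then show ?thesis using fin1 by (simp add: sum.union_disjoint)
  qed
  have pP: "real p \<ge> 2" "N \<ge> 1" if "p \<in> P" for p
    using that prime_ge_2_nat[of p] unfolding P_def by auto
  have s12: "s \<le> 1/2" using s by simp
  have q2: "(real p powr (s - 1)) ^ 2 \<le> real p powr (-5/4)" if "real p \<ge> 2" for p
    unfolding sq_powr using that s by (intro powr_mono) auto
  have B1: "sum T P1 \<le> r * (\<Sum>p\<in>P1. real p powr (s - 1)) + 4 * r * K54"
  proof -
    have "sum T P1 \<le> (\<Sum>p\<in>P1. r * real p powr (s - 1) + 4 * r * (real p powr (s - 1)) ^ 2)"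
      unfolding T_def by (intro sum_mono local_small r s12) (use pP P1_def in auto)
    also have "\<dots> = r * (\<Sum>p\<in>P1. real p powr (s - 1)) + 4 * r * (\<Sum>p\<in>P1. (real p powr (s - 1)) ^ 2)"
      by (simp add: sum.distrib sum_distrib_left)
    also have "(\<Sum>p\<in>P1. (real p powr (s - 1)) ^ 2) \<le> (\<Sum>p\<in>P1. real p powr (-5/4))"
      by (intro sum_mono q2) (use pP P1_def in auto)
    also have "\<dots> \<le> K54" using fin1(1) by (rule sum_le_K54)
    finally show ?thesis using r by (simp add: mult_left_mono)
  qed
  have B2: "sum T P2 \<le> (r + 2) * K54"
  proof -
    have "T p \<le> (r + 2) * real p powr (-5/4)" if p: "p \<in> P2" for p
    proof -
      have p2: "real p \<ge> 2" "N \<ge> 1" and pY: "real p > Y" using pP p unfolding P2_def by auto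
      have lf: "(r + 1) * real p powr (s - 1) \<le> 1/2" "(r + 1) ^ 2 * real p powr (2 * s - 2) \<le> real p powr (-5/4)"
        using large_facts[OF r R s(2)] pY unfolding Y_def by auto
      have t1: "T p \<le> r * real p powr (s - 1) / real p + 2 * (r + 1) ^ 2 * (real p powr (s - 1)) ^ 2"
        unfolding T_def by (rule local_large[OF r(1) p2(1) s12 p2(2) lf(1)])
      have e0: "real p powr (s - 1) / real p = real p powr (s - 2)"
      proof -
        have "real p powr (s - 2) = real p powr ((s - 1) - 1)" by simp
        also have "\<dots> = real p powr (s - 1) / real p powr 1" by (rule powr_diff)
        also have "\<dots> = real p powr (s - 1) / real p" using p2 by simp
        finally show ?thesis by simp
      qed
      have e1: "real p powr (s - 2) \<le> real p powr (-5/4)" using p2 s by (intro powr_mono) auto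
      have e2: "(real p powr (s - 1)) ^ 2 = real p powr (2 * s - 2)" by (simp add: sq_powr algebra_simps)
      have "r * real p powr (s - 1) / real p = r * (real p powr (s - 1) / real p)" by simp
      also have "\<dots> \<le> r * real p powr (-5/4)" using e0 e1 r by (simp add: mult_left_mono)
      finally have "T p \<le> r * real p powr (-5/4) + 2 * ((r + 1) ^ 2 * real p powr (2 * s - 2))"
        using t1 e2 by simp
      then show ?thesis using lf(2) by (simp add: algebra_simps)
    qed
    then have "sum T P2 \<le> (\<Sum>p\<in>P2. (r + 2) * real p powr (-5/4))" by (rule sum_mono)
    also have "\<dots> = (r + 2) * (\<Sum>p\<in>P2. real p powr (-5/4))" by (simp add: sum_distrib_left)
    also have "\<dots> \<le> (r + 2) * K54" using r fin1 by (intro mult_left_mono sum_le_K54) auto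
    finally show ?thesis .
  qed
  have B3: "(\<Sum>p\<in>P1. real p powr (s - 1)) \<le> (\<Sum>p\<in>{p. prime p \<and> real p \<le> Y}. real p powr (s - 1))"
    by (rule sum_mono2[OF finite_primes_le_real]) (auto simp: P1_def P_def)
  have "sum T P \<le> r * (\<Sum>p\<in>{p. prime p \<and> real p \<le> Y}. real p powr (s - 1)) + 4 * r * K54 + (r + 2) * K54"
    using split B1 B2 B3 r by (smt (verit) mult_left_mono)
  then show ?thesis unfolding T_def P_def Y_def by (simp add: algebra_simps)
qed

lemma M_bound:
  fixes W Y s :: real
  assumes W: "W \<ge> 2" and Y: "Y \<ge> 1" and s: "s \<ge> 0"
  shows "(\<Sum>p\<in>{p. prime p \<and> real p \<le> Y}. real p powr (s - 1))
     \<le> W powr s * (2 * ln (ln W) + 2 - 2 * ln (ln 2)) + Y powr s * (2 * ln Y / ln W)"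
proof -
  define A where "A = {p. prime p \<and> real p \<le> Y}"
  define A1 where "A1 = {p\<in>A. real p \<le> W}"
  define A2 where "A2 = {p\<in>A. \<not> real p \<le> W}"
  define f where "f = (\<lambda>p::nat. real p powr (s - 1))"
  have finA: "finite A"
  proof (rule finite_subset[of _ "{..nat \<lfloor>Y\<rfloor>}"])
    show "A \<subseteq> {..nat \<lfloor>Y\<rfloor>}" unfolding A_def by (auto intro: le_nat_floor)
  qed simp
  have fin: "finite A1" "finite A2" using finA unfolding A1_def A2_def by auto
  have split: "sum f A = sum f A1 + sum f A2"
  proof -
    have "A = A1 \<union> A2" "A1 \<inter> A2 = {}" unfolding A1_def A2_def by auto
    then show ?thesis using fin by (simp add: sum.union_disjoint)
  qed
  have pA: "real p \<ge> 2" if "p \<in> A" for p using that prime_ge_2_nat[of p] unfolding A_def by auto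
  have fp: "f p = real p powr s / real p" if "real p \<ge> 2" for p
  proof -
    have "real p powr (s - 1) = real p powr s / real p powr 1" by (rule powr_diff)
    then show ?thesis unfolding f_def using that by simp
  qed
  have lnW: "ln W > 0" using W by simp
  define n where "n = nat \<lfloor>W\<rfloor>"
  have n2: "n \<ge> 2" unfolding n_def using W le_nat_floor[of 2 W] by simp
  have nW: "real n \<le> W" unfolding n_def using W by simp
  have B1: "sum f A1 \<le> W powr s * (2 * ln (ln W) + 2 - 2 * ln (ln 2))"
  proof -
    have "sum f A1 \<le> (\<Sum>p\<in>A1. W powr s * (1 / real p))"
    proof (rule sum_mono)
      fix p assume p: "p \<in> A1"
      then have "real p \<ge> 2" "real p \<le> W" using pA unfolding A1_def by auto
      then have "real p powr s \<le> W powr s" using s by (intro powr_mono2) auto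
      then show "f p \<le> W powr s * (1 / real p)" using fp[OF \<open>real p \<ge> 2\<close>] \<open>real p \<ge> 2\<close>
        by (simp add: divide_right_mono)
    qed
    also have "\<dots> = W powr s * (\<Sum>p\<in>A1. 1 / real p)" by (simp add: sum_distrib_left)
    also have "(\<Sum>p\<in>A1. 1 / real p) \<le> (\<Sum>p | prime p \<and> p \<le> n. 1 / real p)"
      by (rule sum_mono2) (auto simp: A1_def A_def n_def intro: le_nat_floor)
    also have "\<dots> \<le> 2 * ln (ln (real n)) + 2 - 2 * ln (ln 2)" by (rule mertens2[OF n2])
    also have "ln (ln (real n)) \<le> ln (ln W)"
    proof -
      have "real n \<ge> 2" using n2 by simp
      then have "ln (real n) > 0" by simp
      moreover have "ln (real n) \<le> ln W" using nW \<open>real n \<ge> 2\<close> by simp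
      ultimately show ?thesis by simp
    qed
    finally show ?thesis by (simp add: mult_left_mono)
  qed
  define k where "k = nat \<lfloor>Y\<rfloor>"
  have k1: "real k \<ge> 1" "real k \<le> Y" unfolding k_def using Y le_nat_floor[of 1 Y] by auto
  have B2: "sum f A2 \<le> Y powr s * (2 * ln Y / ln W)"
  proof -
    have "sum f A2 \<le> (\<Sum>p\<in>A2. Y powr s / ln W * (ln (real p) / real p))"
    proof (rule sum_mono)
      fix p assume p: "p \<in> A2"
      then have p2: "real p \<ge> 2" "real p \<le> Y" "real p > W" using pA unfolding A2_def A_def by auto
      then have "real p powr s \<le> Y powr s" using s by (intro powr_mono2) auto
      moreover have "1 \<le> ln (real p) / ln W" using p2 lnW W by simp
      then have "Y powr s * 1 \<le> Y powr s * (ln (real p) / ln W)"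
        by (intro mult_left_mono) auto
      ultimately have "real p powr s \<le> Y powr s / ln W * ln (real p)"
        by simp
      then have "real p powr s / real p \<le> (Y powr s / ln W * ln (real p)) / real p"
        using p2 by (intro divide_right_mono) auto
      then show "f p \<le> Y powr s / ln W * (ln (real p) / real p)" using fp[OF p2(1)]
        by simp
    qed
    also have "\<dots> = Y powr s / ln W * (\<Sum>p\<in>A2. ln (real p) / real p)" by (simp add: sum_distrib_left)
    finally have s1: "sum f A2 \<le> Y powr s / ln W * (\<Sum>p\<in>A2. ln (real p) / real p)" .
    have "(\<Sum>p\<in>A2. ln (real p) / real p) \<le> (\<Sum>p | prime p \<and> p \<le> k. ln (real p) / real p)"
    proof (rule sum_mono2)
      show "A2 \<subseteq> {p. prime p \<and> p \<le> k}" by (auto simp: A2_def A_def k_def intro: le_nat_floor)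
      fix b assume "b \<in> {p. prime p \<and> p \<le> k} - A2"
      then have "real b \<ge> 1" using prime_ge_1_nat[of b] by auto
      then show "0 \<le> ln (real b) / real b" by simp
    qed simp
    also have "\<dots> \<le> 2 * ln (real k)" by (rule mertens_crude)
    also have "\<dots> \<le> 2 * ln Y" using k1 by simp
    finally have s2: "(\<Sum>p\<in>A2. ln (real p) / real p) \<le> 2 * ln Y" .
    have "Y powr s / ln W * (\<Sum>p\<in>A2. ln (real p) / real p) \<le> Y powr s / ln W * (2 * ln Y)"
      using s2 lnW by (intro mult_left_mono) auto
    then show ?thesis using s1 by simp
  qed
  show ?thesis using split B1 B2 unfolding A_def f_def by simp
qed

lemma kappa_bound:
  fixes A \<kappa> L2 :: real and m :: nat
  assumes A: "A \<ge> 0" and k: "0 < \<kappa>" "\<kappa> < 1" and L2: "L2 > 0" and m: "m \<ge> 1"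
  shows "real m powr (A / ln (1 + real m) powr \<kappa>) \<le> exp (A * L2 powr (1/\<kappa> - 1)) * real m powr (A / L2)"
proof -
  define U where "U = L2 powr (1/\<kappa>)"
  define l where "l = ln (1 + real m)"
  have l0: "l > 0" unfolding l_def using m by simp
  have U0: "U > 0" unfolding U_def using L2 by simp
  have m1: "real m \<ge> 1" using m by simp
  have E1: "exp (A * L2 powr (1/\<kappa> - 1)) \<ge> 1" using A L2 by simp
  have P1: "real m powr (A / L2) \<ge> 1" using m1 A L2 by (intro ge_one_powr_ge_zero) auto
  show ?thesis
  proof (cases "l \<ge> U")
    case True
    have "U powr \<kappa> = L2" unfolding U_def using L2 k by (simp add: powr_powr)
    moreover have "U powr \<kappa> \<le> l powr \<kappa>" using True U0 k by (intro powr_mono2) auto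
    ultimately have "L2 \<le> l powr \<kappa>" by simp
    then have "A / l powr \<kappa> \<le> A / L2" using A L2 l0 by (intro divide_left_mono mult_pos_pos) auto
    then have "real m powr (A / l powr \<kappa>) \<le> real m powr (A / L2)" using m1 by (intro powr_mono) auto
    also have "\<dots> \<le> exp (A * L2 powr (1/\<kappa> - 1)) * real m powr (A / L2)"
      using mult_right_mono[OF E1, of "real m powr (A / L2)"] by simp
    finally show ?thesis unfolding l_def .
  next
    case False
    have lnm: "ln (real m) \<le> l" "0 \<le> ln (real m)" unfolding l_def using m1 by auto
    have "ln (real m) * (A / l powr \<kappa>) \<le> l * (A / l powr \<kappa>)"
      using lnm A l0 by (intro mult_right_mono) auto
    also have "\<dots> = A * (l / l powr \<kappa>)" by simp
    also have "l / l powr \<kappa> = l powr (1 - \<kappa>)" using l0 by (simp add: powr_diff)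
    also have "A * l powr (1 - \<kappa>) \<le> A * U powr (1 - \<kappa>)"
      using False l0 k A by (intro mult_left_mono powr_mono2) auto
    also have "U powr (1 - \<kappa>) = L2 powr (1/\<kappa> - 1)"
      unfolding U_def using L2 k by (simp add: powr_powr field_simps)
    finally have ex: "ln (real m) * (A / l powr \<kappa>) \<le> A * L2 powr (1/\<kappa> - 1)" .
    have "real m powr (A / l powr \<kappa>) = exp (ln (real m) * (A / l powr \<kappa>))"
      using m1 by (simp add: powr_def mult.commute)
    also have "\<dots> \<le> exp (A * L2 powr (1/\<kappa> - 1))" using ex by simp
    also have "\<dots> \<le> exp (A * L2 powr (1/\<kappa> - 1)) * real m powr (A / L2)"
      using mult_left_mono[OF P1, of "exp (A * L2 powr (1/\<kappa> - 1))"] by simp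
    finally show ?thesis unfolding l_def .
  qed
qed

lemma partial_bound:
  fixes x A C B \<kappa> \<eta> :: real and z :: complex and a :: "nat \<Rightarrow> complex" and N :: nat
  defines "L2 \<equiv> ln (ln x)" and "L3 \<equiv> ln (ln (ln x))"
      and "R \<equiv> B * ln x / (ln (ln x) * ln (ln (ln x)))"
  assumes k: "0 < \<kappa>" "\<kappa> < 1" and A: "A \<ge> 1" and C: "C \<ge> 1" and B: "B > 0"
    and \<eta>: "0 < \<eta>" "\<eta> \<le> 1"
    and x0: "ln x > 1" "L2 > 1" and x1: "L3 > 0" and x2: "2 * A / L2 \<le> 1/8" and x3: "R \<ge> 1"
    and x4: "R + 1 \<le> ln x" and x5: "\<eta> * L2 \<ge> ln 2"
    and ha: "\<forall>m\<ge>1. norm (a m) \<le> C * real m powr (A * (1 / ln (1 + real m) powr \<kappa> + 1 / L2)) / real (sqfree_part m)"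
    and hz: "norm z \<le> R"
  shows "(\<Sum>m\<in>{1..N}. norm (dz z m / of_nat m * a m))
     \<le> exp (ln C + A * L2 powr (1/\<kappa> - 1) + 2 * K54 + 2 * B * exp (2 * A * \<eta>) * (ln x / L2)
            + R * (exp (2 * A * \<eta>) * (2 - 2 * ln (ln 2)) + 8 * exp (8 * A) / \<eta> + 5 * K54))"
proof -
  define r where "r = norm z"
  define s where "s = 2 * A / L2"
  define E where "E = exp (A * L2 powr (1/\<kappa> - 1))"
  define G where "G = (\<lambda>m. \<Prod>p\<in>prime_factors m. hh r s (real p) (multiplicity p m))"
  define P where "P = {p. prime p \<and> p \<le> N}"
  define T where "T = (\<lambda>p::nat. \<Sum>v\<in>{..N}. hh r s (real p) v)"
  define W where "W = exp (\<eta> * L2)"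
  define Y where "Y = (R + 1) powr 4"
  define M where "M = (\<Sum>p\<in>{p. prime p \<and> real p \<le> Y}. real p powr (s - 1))"
  have r: "0 \<le> r" "r \<le> R" unfolding r_def using hz by auto
  have L2p: "L2 > 0" using x0 by simp
  have s: "0 \<le> s" "s \<le> 1/8" unfolding s_def using x2 A L2p by auto
  have E0: "E > 0" unfolding E_def by simp
  have G0: "G m \<ge> 0" for m unfolding G_def using r by (intro prod_nonneg hh_nonneg) auto
  have step1: "norm (dz z m / of_nat m * a m) \<le> C * E * G m" if m: "m \<in> {1..N}" for m
  proof -
    have m1: "m \<ge> 1" "real m \<ge> 1" using m by auto
    define l where "l = ln (1 + real m)"
    have l0: "l > 0" unfolding l_def using m1 by simp
    define \<beta> where "\<beta> = 1 / l powr \<kappa> + 1 / L2"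
    define sq where "sq = real (sqfree_part m)"
    have sq0: "sq > 0" unfolding sq_def using sqf_pos by simp
    have "real m powr (A * \<beta>) = real m powr (A / l powr \<kappa>) * real m powr (A / L2)"
      unfolding \<beta>_def by (simp add: powr_add[symmetric] algebra_simps)
    also have "\<dots> \<le> (E * real m powr (A / L2)) * real m powr (A / L2)"
      unfolding E_def l_def using kappa_bound[of A \<kappa> L2 m] A k L2p m1
      by (intro mult_right_mono) auto
    also have "\<dots> = E * real m powr s"
      unfolding s_def by (simp add: powr_add[symmetric] algebra_simps)
    finally have pw: "real m powr (A * \<beta>) \<le> E * real m powr s" .
    have "norm (a m) \<le> C * real m powr (A * \<beta>) / sq"
      using ha m1 unfolding \<beta>_def l_def sq_def by auto
    also have "\<dots> \<le> C * (E * real m powr s) / sq"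
      using pw C sq0 by (intro divide_right_mono mult_left_mono) auto
    finally have na: "norm (a m) \<le> C * (E * real m powr s) / sq" .
    have "norm (dz z m / of_nat m * a m) = norm (dz z m) / real m * norm (a m)"
      by (simp add: norm_mult norm_divide)
    also have "\<dots> \<le> norm (dz z m) / real m * (C * (E * real m powr s) / sq)"
      using na by (intro mult_left_mono) auto
    also have "\<dots> = C * E * (norm (dz z m) * (real m powr s / real m) / sq)"
      by (simp add: field_simps)
    also have "real m powr s / real m = real m powr (s - 1)"
      using m1 by (simp add: powr_diff)
    also have "C * E * (norm (dz z m) * real m powr (s - 1) / sq) \<le> C * E * G m"
      unfolding G_def sq_def r_def using C E0 m1
      by (intro mult_left_mono pointwise) auto
    finally show ?thesis .
  qed
  have step2: "(\<Sum>m\<in>{1..N}. G m) \<le> (\<Prod>p\<in>P. T p)"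
    unfolding G_def P_def T_def
    by (rule euler_bound[where h = "\<lambda>p v. hh r s (real p) v"]) (use r in \<open>auto intro: hh_nonneg\<close>)
  have T1: "T p \<ge> 1" for p unfolding T_def using r by (intro T_ge1) auto
  have step3: "(\<Prod>p\<in>P. T p) \<le> exp (r * M + 5 * r * K54 + 2 * K54)"
  proof -
    have Tp: "0 < T p" for p using T1[of p] by linarith
    have "(\<Prod>p\<in>P. T p) = (\<Prod>p\<in>P. exp (ln (T p)))"
      using Tp by simp
    also have "\<dots> = exp (\<Sum>p\<in>P. ln (T p))"
      by (rule exp_sum[symmetric]) (simp add: P_def)
    also have "\<dots> \<le> exp (r * M + 5 * r * K54 + 2 * K54)"
      unfolding M_def Y_def P_def T_def using log_prod_bound[OF r x3 s] by simp
    finally show ?thesis .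
  qed
  have W2: "W \<ge> 2"
  proof -
    have "exp (ln 2) \<le> W" unfolding W_def using x5 by (subst exp_le_cancel_iff)
    then show ?thesis by simp
  qed
  have Y1: "Y \<ge> 1" unfolding Y_def using x3 by simp
  have lnR: "0 < ln (R + 1)" "ln (R + 1) \<le> L2" unfolding L2_def using x3 x4 x0 by auto
  have lnW: "ln W = \<eta> * L2" unfolding W_def by simp
  have lnY: "ln Y = 4 * ln (R + 1)" unfolding Y_def using x3 by (simp add: ln_realpow)
  have Ws: "W powr s = exp (2 * A * \<eta>)"
    unfolding powr_def lnW s_def using W2 L2p by (simp add: field_simps)
  have lnlnW: "ln (ln W) \<le> L3"
  proof -
    have "ln (ln W) = ln \<eta> + L2'" if "L2' = ln L2" for L2' unfolding lnW that using \<eta> L2p by (simp add: ln_mult)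
    moreover have "ln \<eta> \<le> 0" using \<eta> by simp
    ultimately show ?thesis unfolding L3_def L2_def by fastforce
  qed
  have Ys: "Y powr s \<le> exp (8 * A)"
  proof -
    have "Y powr s = exp (s * ln Y)" unfolding powr_def using Y1 by simp
    also have "s * ln Y = 2 * A * 4 * (ln (R + 1) / L2)" unfolding lnY s_def by (simp add: field_simps)
    also have "\<dots> \<le> 2 * A * 4 * 1" using lnR L2p A by (intro mult_left_mono) auto
    finally show ?thesis by simp
  qed
  have YW: "2 * ln Y / ln W \<le> 8 / \<eta>"
  proof -
    have "2 * ln Y / ln W = 8 / \<eta> * (ln (R + 1) / L2)" unfolding lnY lnW using \<eta> L2p by (simp add: field_simps)
    also have "\<dots> \<le> 8 / \<eta> * 1" using lnR L2p \<eta> by (intro mult_left_mono) auto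
    finally show ?thesis by simp
  qed
  have step4: "M \<le> exp (2 * A * \<eta>) * (2 * L3 + (2 - 2 * ln (ln 2))) + exp (8 * A) * (8 / \<eta>)"
  proof -
    have "M \<le> W powr s * (2 * ln (ln W) + 2 - 2 * ln (ln 2)) + Y powr s * (2 * ln Y / ln W)"
      unfolding M_def by (rule M_bound[OF W2 Y1 s(1)])
    also have "\<dots> \<le> exp (2 * A * \<eta>) * (2 * L3 + (2 - 2 * ln (ln 2))) + exp (8 * A) * (8 / \<eta>)"
    proof (rule add_mono)
      show "W powr s * (2 * ln (ln W) + 2 - 2 * ln (ln 2)) \<le> exp (2 * A * \<eta>) * (2 * L3 + (2 - 2 * ln (ln 2)))"
        unfolding Ws using lnlnW by (intro mult_left_mono) auto
      have "0 \<le> 2 * ln Y / ln W" using Y1 W2 by (intro divide_nonneg_pos) auto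
      then show "Y powr s * (2 * ln Y / ln W) \<le> exp (8 * A) * (8 / \<eta>)"
        using Ys YW by (intro mult_mono) auto
    qed
    finally show ?thesis .
  qed
  have M0: "M \<ge> 0" unfolding M_def by (intro sum_nonneg) auto
  have RL3: "R * L3 = B * (ln x / L2)" unfolding R_def L2_def L3_def using x1 unfolding L3_def by (simp add: field_simps)
  have step5: "r * M + 5 * r * K54 \<le> 2 * B * exp (2 * A * \<eta>) * (ln x / L2)
            + R * (exp (2 * A * \<eta>) * (2 - 2 * ln (ln 2)) + 8 * exp (8 * A) / \<eta> + 5 * K54)"
  proof -
    have "r * M + 5 * r * K54 \<le> R * M + 5 * R * K54"
      using r M0 K54_nonneg by (intro add_mono mult_right_mono mult_left_mono) auto
    also have "\<dots> \<le> R * (exp (2 * A * \<eta>) * (2 * L3 + (2 - 2 * ln (ln 2))) + exp (8 * A) * (8 / \<eta>)) + 5 * R * K54"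
      using step4 x3 by (intro add_mono mult_left_mono) auto
    also have "\<dots> = 2 * exp (2 * A * \<eta>) * (R * L3)
            + R * (exp (2 * A * \<eta>) * (2 - 2 * ln (ln 2)) + 8 * exp (8 * A) / \<eta> + 5 * K54)"
      by (simp add: algebra_simps)
    also have "\<dots> = 2 * B * exp (2 * A * \<eta>) * (ln x / L2)
            + R * (exp (2 * A * \<eta>) * (2 - 2 * ln (ln 2)) + 8 * exp (8 * A) / \<eta> + 5 * K54)"
      unfolding RL3 by (simp add: algebra_simps)
    finally show ?thesis .
  qed
  have "(\<Sum>m\<in>{1..N}. norm (dz z m / of_nat m * a m)) \<le> (\<Sum>m\<in>{1..N}. C * E * G m)"
    by (rule sum_mono[OF step1])
  also have "\<dots> = C * E * (\<Sum>m\<in>{1..N}. G m)" by (simp add: sum_distrib_left)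
  also have "\<dots> \<le> C * E * exp (r * M + 5 * r * K54 + 2 * K54)"
    using step2 step3 C E0 by (intro mult_left_mono) auto
  also have "\<dots> = exp (ln C + A * L2 powr (1/\<kappa> - 1) + (r * M + 5 * r * K54 + 2 * K54))"
    unfolding E_def using C by (simp add: exp_add)
  also have "\<dots> \<le> exp (ln C + A * L2 powr (1/\<kappa> - 1) + 2 * K54 + 2 * B * exp (2 * A * \<eta>) * (ln x / L2)
            + R * (exp (2 * A * \<eta>) * (2 - 2 * ln (ln 2)) + 8 * exp (8 * A) / \<eta> + 5 * K54))"
    using step5 by simp
  finally show ?thesis .
qed

lemma ha_mono:
  fixes A C A' C' L2 \<kappa> :: real and a :: "nat \<Rightarrow> complex"
  assumes L2: "L2 > 0" and AA: "A \<le> A'" and CC: "C \<le> C'" "C' \<ge> 0"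
    and ha: "\<forall>m\<ge>1. norm (a m) \<le> C * real m powr (A * (1 / ln (1 + real m) powr \<kappa> + 1 / L2)) / real (sqfree_part m)"
  shows "\<forall>m\<ge>1. norm (a m) \<le> C' * real m powr (A' * (1 / ln (1 + real m) powr \<kappa> + 1 / L2)) / real (sqfree_part m)"
proof (intro allI impI)
  fix m :: nat assume m: "m \<ge> 1"
  define \<beta> where "\<beta> = 1 / ln (1 + real m) powr \<kappa> + 1 / L2"
  define sq where "sq = real (sqfree_part m)"
  have sq0: "sq > 0" unfolding sq_def using sqf_pos by simp
  have b0: "\<beta> \<ge> 0" unfolding \<beta>_def using L2 by simp
  have pm: "real m powr (A * \<beta>) \<le> real m powr (A' * \<beta>)"
    using m b0 AA by (intro powr_mono mult_right_mono) auto
  have "norm (a m) \<le> C * real m powr (A * \<beta>) / sq" using ha m unfolding \<beta>_def sq_def by auto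
  also have "\<dots> \<le> C' * real m powr (A * \<beta>) / sq"
    using CC sq0 by (intro divide_right_mono mult_right_mono) auto
  also have "\<dots> \<le> C' * real m powr (A' * \<beta>) / sq"
    using pm CC sq0 by (intro divide_right_mono mult_left_mono) auto
  finally show "norm (a m) \<le> C' * real m powr (A' * (1 / ln (1 + real m) powr \<kappa> + 1 / L2)) / real (sqfree_part m)"
    unfolding \<beta>_def sq_def .
qed

theorem lemma19:
  fixes \<kappa> B C A \<epsilon> :: real
  assumes "0 < \<kappa>" and "\<kappa> < 1/2" and "B > 0" and "\<epsilon> > 0"
  shows "\<forall>\<^sub>F x in at_top.
    \<forall>(a :: nat \<Rightarrow> complex) (z :: complex).
      (\<forall>m\<ge>1. norm (a m) \<le> C * real m powr (A * (1 / ln (1 + real m) powr \<kappa> + 1 / ln (ln x)))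
                               / real (sqfree_part m))
      \<longrightarrow> norm z \<le> B * ln x / (ln (ln x) * ln (ln (ln x)))
      \<longrightarrow> summable (\<lambda>m. norm (dz z (Suc m) / of_nat (Suc m) * a (Suc m)))
          \<and> norm (\<Sum>m. dz z (Suc m) / of_nat (Suc m) * a (Suc m))
              \<le> exp ((2 * B + \<epsilon>) * ln x / ln (ln x))"
proof -
  have k: "0 < \<kappa>" "\<kappa> < 1" using assms by auto
  have B: "B > 0" and e: "\<epsilon> > 0" using assms by auto
  define A' where "A' = max A 1"
  define C' where "C' = max C 1"
  have A': "A' \<ge> 1" "A \<le> A'" unfolding A'_def by auto
  have C': "C' \<ge> 1" "C \<le> C'" unfolding C'_def by auto
  define \<eta> where "\<eta> = min 1 (ln (1 + \<epsilon> / (4 * B)) / (2 * A'))"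
  have eB: "\<epsilon> / (4 * B) > 0" using e B by simp
  have lne: "ln (1 + \<epsilon> / (4 * B)) > 0" using eB by (intro ln_gt_zero) auto
  have \<eta>: "0 < \<eta>" "\<eta> \<le> 1" unfolding \<eta>_def using lne A' by auto
  have e\<eta>: "exp (2 * A' * \<eta>) \<le> 1 + \<epsilon> / (4 * B)"
  proof -
    have "2 * A' * \<eta> \<le> 2 * A' * (ln (1 + \<epsilon> / (4 * B)) / (2 * A'))"
      unfolding \<eta>_def using A' by (intro mult_left_mono) auto
    also have "\<dots> = ln (1 + \<epsilon> / (4 * B))" using A' by simp
    finally have "exp (2 * A' * \<eta>) \<le> exp (ln (1 + \<epsilon> / (4 * B)))" by simp
    also have "\<dots> = 1 + \<epsilon> / (4 * B)" using eB by (intro exp_ln) auto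
    finally show ?thesis .
  qed
  define D where "D = exp (2 * A' * \<eta>) * (2 - 2 * ln (ln 2)) + 8 * exp (8 * A') / \<eta> + 5 * K54"
  define c1 where "c1 = ln C' + 2 * K54"
  define R where "R = (\<lambda>x::real. B * ln x / (ln (ln x) * ln (ln (ln x))))"
  have ev: "\<forall>\<^sub>F x in at_top. ln x > 1 \<and> ln (ln x) > 1 \<and> ln (ln (ln x)) > 0
      \<and> 2 * A' / ln (ln x) \<le> 1/8 \<and> R x \<ge> 1 \<and> R x + 1 \<le> ln x \<and> \<eta> * ln (ln x) \<ge> ln 2
      \<and> c1 \<le> \<epsilon> / 6 * (ln x / ln (ln x))
      \<and> A' * ln (ln x) powr (1/\<kappa> - 1) \<le> \<epsilon> / 6 * (ln x / ln (ln x))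
      \<and> B * D / ln (ln (ln x)) \<le> \<epsilon> / 6"
  proof -
    have e6: "\<epsilon> / 6 > 0" using e by simp
    show ?thesis unfolding R_def
      using B \<eta>(1) e6
      by (intro eventually_conj; real_asymp)
  qed
  show ?thesis
  proof (rule eventually_mono[OF ev], intro allI impI)
    fix x :: real and a :: "nat \<Rightarrow> complex" and z :: complex
    assume X: "ln x > 1 \<and> ln (ln x) > 1 \<and> ln (ln (ln x)) > 0
      \<and> 2 * A' / ln (ln x) \<le> 1/8 \<and> R x \<ge> 1 \<and> R x + 1 \<le> ln x \<and> \<eta> * ln (ln x) \<ge> ln 2
      \<and> c1 \<le> \<epsilon> / 6 * (ln x / ln (ln x))
      \<and> A' * ln (ln x) powr (1/\<kappa> - 1) \<le> \<epsilon> / 6 * (ln x / ln (ln x))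
      \<and> B * D / ln (ln (ln x)) \<le> \<epsilon> / 6"
    assume ha: "\<forall>m\<ge>1. norm (a m) \<le> C * real m powr (A * (1 / ln (1 + real m) powr \<kappa> + 1 / ln (ln x)))
                               / real (sqfree_part m)"
    assume hz: "norm z \<le> B * ln x / (ln (ln x) * ln (ln (ln x)))"
    define L2 where "L2 = ln (ln x)"
    define L3 where "L3 = ln (ln (ln x))"
    define Q where "Q = ln x / L2"
    have L2p: "L2 > 0" "L3 > 0" using X unfolding L2_def L3_def by auto
    have Q0: "Q > 0" unfolding Q_def using X L2p by simp
    have ha': "\<forall>m\<ge>1. norm (a m) \<le> C' * real m powr (A' * (1 / ln (1 + real m) powr \<kappa> + 1 / ln (ln x))) / real (sqfree_part m)"
      using ha_mono[OF _ A'(2) C'(2) _ ha] X C' by auto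
    define Bd where "Bd = exp (ln C' + A' * L2 powr (1/\<kappa> - 1) + 2 * K54 + 2 * B * exp (2 * A' * \<eta>) * (ln x / L2)
            + R x * D)"
    have X1: "ln x > 1" and X2: "ln (ln x) > 1" and X3: "ln (ln (ln x)) > 0"
      and X4: "2 * A' / ln (ln x) \<le> 1/8" and X5: "B * ln x / (ln (ln x) * ln (ln (ln x))) \<ge> 1"
      and X6: "B * ln x / (ln (ln x) * ln (ln (ln x))) + 1 \<le> ln x" and X7: "\<eta> * ln (ln x) \<ge> ln 2"
      using X unfolding R_def by auto
    have pb: "(\<Sum>m\<in>{1..N}. norm (dz z m / of_nat m * a m)) \<le> Bd" for N
      using partial_bound[OF k A'(1) C'(1) B \<eta> X1 X2 X3 X4 X5 X6 X7 ha' hz, of N]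
      unfolding Bd_def D_def L2_def R_def .
    have RD: "R x * D = (B * D / L3) * Q" unfolding R_def Q_def L2_def L3_def by (simp add: field_simps)
    have "ln C' + A' * L2 powr (1/\<kappa> - 1) + 2 * K54 + 2 * B * exp (2 * A' * \<eta>) * (ln x / L2) + R x * D
        \<le> (2 * B + \<epsilon>) * Q"
    proof -
      have t1: "c1 \<le> \<epsilon> / 6 * Q" using X unfolding Q_def L2_def by simp
      have t2: "A' * L2 powr (1/\<kappa> - 1) \<le> \<epsilon> / 6 * Q" using X unfolding Q_def L2_def by simp
      have t3: "R x * D \<le> \<epsilon> / 6 * Q" unfolding RD using X Q0 unfolding L3_def
        by (intro mult_right_mono) auto
      have t4: "2 * B * exp (2 * A' * \<eta>) * Q \<le> 2 * B * (1 + \<epsilon> / (4 * B)) * Q"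
        using e\<eta> B Q0 by (intro mult_right_mono mult_left_mono) auto
      have t5: "2 * B * (1 + \<epsilon> / (4 * B)) * Q = 2 * B * Q + \<epsilon> / 2 * Q" using B by (simp add: field_simps)
      show ?thesis using t1 t2 t3 t4 t5 unfolding c1_def Q_def by (simp add: algebra_simps)
    qed
    then have BdB: "Bd \<le> exp ((2 * B + \<epsilon>) * ln x / ln (ln x))"
      unfolding Bd_def Q_def L2_def by simp
    define f where "f = (\<lambda>m. dz z (Suc m) / of_nat (Suc m) * a (Suc m))"
    have ps: "(\<Sum>i<n. norm (f i)) \<le> Bd" for n
    proof -
      have "(\<Sum>i<n. norm (f i)) = (\<Sum>m\<in>{1..n}. norm (dz z m / of_nat m * a m))"
        unfolding f_def by (simp add: sum.atLeast1_atMost_eq)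
      then show ?thesis using pb[of n] by simp
    qed
    have sm: "summable (\<lambda>m. norm (f m))"
      by (rule summableI_nonneg_bounded[OF _ ps]) simp
    have "norm (suminf f) \<le> (\<Sum>m. norm (f m))" by (rule summable_norm[OF sm])
    also have "\<dots> \<le> Bd" by (rule suminf_le_const[OF sm ps])
    finally have "norm (suminf f) \<le> exp ((2 * B + \<epsilon>) * ln x / ln (ln x))" using BdB by simp
    then show "summable (\<lambda>m. norm (dz z (Suc m) / of_nat (Suc m) * a (Suc m)))
          \<and> norm (\<Sum>m. dz z (Suc m) / of_nat (Suc m) * a (Suc m))
              \<le> exp ((2 * B + \<epsilon>) * ln x / ln (ln x))"
      using sm unfolding f_def by simp
  qed
qed

end
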